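(* Let $\mathcal{X}$ be a finite-dimensional real Hilbert space, $\rho\in\mathbb{R}$, and $f:\mathcal{X}\to\mathbb{R}$ $\rho$-convex. Let $(x^i)_{i\ge1}\subset\mathcal{X}$, $\bar x^i:=\frac1i\sum_{j=1}^i x^j$, and for $N\in\mathbb{N}$ let $\bar f:=\frac1N\sum_{i=1}^N f(x^i)$. Then for all $N\in\mathbb{N}$, \[ f(\bar x^N)\le\bar f-\frac{\rho}{2N}\sum_{i=1}^N\frac{i-1}{i}\|x^i-\bar x^{i-1}\|^2, \] and moreover for every $x\in\mathcal{X}$, \[ f(\bar x^N)\le\bar f+\max(0,-\rho)\left[\frac1N\sum_{i=1}^N\|x^i-x\|^2+\frac1N\sum_{i=1}^N\frac1i\sum_{j=1}^{i-1}\|x^j-x\|^2\right]. \]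
   Context: $f$ is $\rho$-convex if $f-\frac{\rho}{2}\|\cdot\|^2$ is convex. The $i=1$ term in the first sum has coefficient $0$ (so $\bar x^0$ plays no role). *)

theory Defs
  imports "HOL-Analysis.Analysis"
begin

definition rho_convex :: "real \<Rightarrow> ('a::real_inner \<Rightarrow> real) \<Rightarrow> bool" where
  "rho_convex \<rho> f \<longleftrightarrow> convex_on UNIV (\<lambda>y. f y - (\<rho> / 2) * (norm y)\<^sup>2)"

text \<open>Running average: xbar x i = (1/i) * sum_{j=1..i} x j  (xbar x 0 = 0, unused).\<close>
definition xbar :: "(nat \<Rightarrow> 'a::real_vector) \<Rightarrow> nat \<Rightarrow> 'a" where
  "xbar x i = (1 / real i) *\<^sub>R (\<Sum>j=1..i. x j)"

end

theory Submission
  imports Defs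
begin

lemma norm_comb_identity:
  fixes a b :: "'a::real_inner"
  shows "(norm ((1 - t) *\<^sub>R a + t *\<^sub>R b))\<^sup>2
     = (1 - t) * (norm a)\<^sup>2 + t * (norm b)\<^sup>2 - t * (1 - t) * (norm (a - b))\<^sup>2"
  unfolding power2_norm_eq_inner
  by (simp add: inner_add_left inner_add_right inner_diff_left
      inner_diff_right inner_commute algebra_simps)

lemma rho_step:
  assumes "rho_convex \<rho> f" "0 \<le> t" "t \<le> 1"
  shows "f ((1 - t) *\<^sub>R a + t *\<^sub>R b) \<le> (1 - t) * f a + t * f b
            - \<rho> / 2 * (t * (1 - t)) * (norm (a - b))\<^sup>2"
proof -
  have "f ((1 - t) *\<^sub>R a + t *\<^sub>R b) - \<rho> / 2 * (norm ((1 - t) *\<^sub>R a + t *\<^sub>R b))\<^sup>2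
     \<le> (1 - t) * (f a - \<rho> / 2 * (norm a)\<^sup>2) + t * (f b - \<rho> / 2 * (norm b)\<^sup>2)"
    using convex_onD[OF assms(1)[unfolded rho_convex_def], of t a b] assms(2,3) by simp
  then have H: "f ((1 - t) *\<^sub>R a + t *\<^sub>R b) - \<rho> / 2 * ((1 - t) * (norm a)\<^sup>2 + t * (norm b)\<^sup>2 - t * (1 - t) * (norm (a - b))\<^sup>2)
     \<le> (1 - t) * (f a - \<rho> / 2 * (norm a)\<^sup>2) + t * (f b - \<rho> / 2 * (norm b)\<^sup>2)"
    unfolding norm_comb_identity .
  have e1: "\<rho> / 2 * ((1 - t) * (norm a)\<^sup>2 + t * (norm b)\<^sup>2 - t * (1 - t) * (norm (a - b))\<^sup>2)
     = (1 - t) * (\<rho> / 2 * (norm a)\<^sup>2) + t * (\<rho> / 2 * (norm b)\<^sup>2) - \<rho> / 2 * (t * (1 - t)) * (norm (a - b))\<^sup>2"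
    by (simp add: field_simps)
  have e2: "(1 - t) * (f a - \<rho> / 2 * (norm a)\<^sup>2) = (1 - t) * f a - (1 - t) * (\<rho> / 2 * (norm a)\<^sup>2)"
    "t * (f b - \<rho> / 2 * (norm b)\<^sup>2) = t * f b - t * (\<rho> / 2 * (norm b)\<^sup>2)"
    by (simp_all add: algebra_simps)
  show ?thesis using H unfolding e1 e2 by argo
qed

lemma xbar_Suc:
  "xbar x (Suc n) = (real n / real (Suc n)) *\<^sub>R xbar x n + (1 / real (Suc n)) *\<^sub>R x (Suc n)"
proof (cases "n = 0")
  case True
  then show ?thesis by (simp add: xbar_def)
next
  case False
  have "(real n / real (Suc n)) *\<^sub>R xbar x n = (1 / real (Suc n)) *\<^sub>R (\<Sum>j=1..n. x j)"
    using False by (simp add: xbar_def)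
  moreover have "(\<Sum>j=1..Suc n. x j) = (\<Sum>j=1..n. x j) + x (Suc n)" by simp
  ultimately show ?thesis by (simp add: xbar_def scaleR_add_right)
qed

lemma telescope:
  assumes "rho_convex \<rho> f"
  shows "real n * f (xbar x n) \<le> (\<Sum>i=1..n. f (x i))
      - \<rho> / 2 * (\<Sum>i=1..n. (real i - 1) / real i * (norm (x i - xbar x (i - 1)))\<^sup>2)"
proof (induction n)
  case 0
  then show ?case by simp
next
  case (Suc n)
  define t where "t = 1 / real (Suc n)"
  have t: "0 \<le> t" "t \<le> 1" "1 - t = real n / real (Suc n)"
    by (auto simp: t_def field_simps)
  have "f (xbar x (Suc n)) \<le> (1 - t) * f (xbar x n) + t * f (x (Suc n))
            - \<rho> / 2 * (t * (1 - t)) * (norm (xbar x n - x (Suc n)))\<^sup>2"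
  proof -
    have X: "xbar x (Suc n) = (1 - t) *\<^sub>R xbar x n + t *\<^sub>R x (Suc n)"
      using xbar_Suc[of x n] t(3) t_def by simp
    show ?thesis unfolding X by (rule rho_step[OF assms t(1,2)])
  qed
  then have "real (Suc n) * f (xbar x (Suc n)) \<le> real (Suc n) * ((1 - t) * f (xbar x n) + t * f (x (Suc n))
            - \<rho> / 2 * (t * (1 - t)) * (norm (xbar x n - x (Suc n)))\<^sup>2)"
    by (simp add: mult_left_mono)
  also have "\<dots> = real n * f (xbar x n) + f (x (Suc n))
       - \<rho> / 2 * ((real (Suc n) - 1) / real (Suc n) * (norm (x (Suc n) - xbar x (Suc n - 1)))\<^sup>2)"
  proof -
    have g: "real (Suc n) * ((1 - t) * A + t * B - c * (t * (1 - t)) * D)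
       = (real (Suc n) * (1 - t)) * A + (real (Suc n) * t) * B - c * ((real (Suc n) * t) * (1 - t)) * D"
      for A B c D by (simp add: algebra_simps)
    have k1: "real (Suc n) * (1 - t) = real n" using t(3) by simp
    have k2: "real (Suc n) * t = 1" by (simp add: t_def)
    have k3: "1 - t = (real (Suc n) - 1) / real (Suc n)" using t(3) by simp
    show ?thesis unfolding g unfolding k1 k2 unfolding k3 by (simp add: norm_minus_commute)
  qed
  finally have L: "real (Suc n) * f (xbar x (Suc n)) \<le> real n * f (xbar x n) + f (x (Suc n))
       - \<rho> / 2 * ((real (Suc n) - 1) / real (Suc n) * (norm (x (Suc n) - xbar x (Suc n - 1)))\<^sup>2)" .
  have s1: "(\<Sum>i=1..Suc n. f (x i)) = (\<Sum>i=1..n. f (x i)) + f (x (Suc n))" by simp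
  have s2: "(\<Sum>i=1..Suc n. (real i - 1) / real i * (norm (x i - xbar x (i - 1)))\<^sup>2)
     = (\<Sum>i=1..n. (real i - 1) / real i * (norm (x i - xbar x (i - 1)))\<^sup>2)
       + (real (Suc n) - 1) / real (Suc n) * (norm (x (Suc n) - xbar x (Suc n - 1)))\<^sup>2"
    by (rule sum.cl_ivl_Suc[THEN trans]) simp
  show ?case unfolding s1 s2 distrib_left using L Suc.IH by linarith
qed

lemma jensen_sq:
  assumes "m \<ge> 1"
  shows "(norm (xbar x m - z))\<^sup>2 \<le> (1 / real m) * (\<Sum>j=1..m. (norm (x j - z))\<^sup>2)"
proof -
  have eq: "xbar x m - z = (1 / real m) *\<^sub>R (\<Sum>j=1..m. x j - z)"
    using assms by (simp add: xbar_def sum_subtractf scaleR_diff_right sum_constant_scaleR)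
  have "norm (xbar x m - z) \<le> (1 / real m) * (\<Sum>j=1..m. norm (x j - z))"
    unfolding eq using norm_sum[of "\<lambda>j. x j - z" "{1..m}"] by (simp add: divide_right_mono)
  then have "(norm (xbar x m - z))\<^sup>2 \<le> ((1 / real m) * (\<Sum>j=1..m. norm (x j - z)))\<^sup>2"
    by (simp add: power_mono)
  also have "\<dots> = (1 / real m)\<^sup>2 * (\<Sum>j=1..m. norm (x j - z))\<^sup>2" by (simp add: power_mult_distrib power_divide)
  also have "\<dots> \<le> (1 / real m)\<^sup>2 * ((\<Sum>j=1..m. (norm (x j - z))\<^sup>2) * real m)"
    using sum_squared_le_sum_of_squares[of "\<lambda>j. norm (x j - z)" "{1..m}"]
    by (intro mult_left_mono) auto
  also have "\<dots> = (1 / real m) * (\<Sum>j=1..m. (norm (x j - z))\<^sup>2)"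
    using assms by (simp add: power2_eq_square field_simps)
  finally show ?thesis .
qed

lemma sq_le: "(p + q)\<^sup>2 \<le> 2 * p\<^sup>2 + 2 * (q::real)\<^sup>2"
proof -
  have "0 \<le> (p - q)\<^sup>2" by simp
  then show ?thesis by (simp add: power2_eq_square algebra_simps)
qed

lemma per_i:
  assumes "i \<ge> 1"
  shows "(real i - 1) / real i * (norm (x i - xbar x (i - 1)))\<^sup>2
     \<le> 2 * (norm (x i - z))\<^sup>2 + 2 * ((1 / real i) * (\<Sum>j=1..i-1. (norm (x j - z))\<^sup>2))"
proof (cases "i = 1")
  case True
  then show ?thesis by simp
next
  case False
  define m where "m = i - 1"
  have m: "m \<ge> 1" "real i = real m + 1" "real i - 1 = real m" using False assms by (auto simp: m_def)
  define A where "A = (norm (x i - z))\<^sup>2"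
  define B where "B = (norm (xbar x m - z))\<^sup>2"
  define C where "C = (\<Sum>j=1..m. (norm (x j - z))\<^sup>2)"
  have A0: "A \<ge> 0" by (simp add: A_def)
  have BC: "B \<le> (1 / real m) * C" unfolding B_def C_def by (rule jensen_sq[OF m(1)])
  have "norm (x i - xbar x m) \<le> norm (x i - z) + norm (xbar x m - z)"
  proof -
    have "x i - xbar x m = (x i - z) - (xbar x m - z)" by simp
    then show ?thesis using norm_triangle_ineq4[of "x i - z" "xbar x m - z"] by simp
  qed
  then have "(norm (x i - xbar x m))\<^sup>2 \<le> (norm (x i - z) + norm (xbar x m - z))\<^sup>2"
    by (simp add: power_mono)
  also have "\<dots> \<le> 2 * A + 2 * B"
    unfolding A_def B_def by (rule sq_le)
  finally have D: "(norm (x i - xbar x m))\<^sup>2 \<le> 2 * A + 2 * B" .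
  have q: "0 \<le> real m / (real m + 1)" "real m / (real m + 1) \<le> 1" by auto
  have "real m / (real m + 1) * (norm (x i - xbar x m))\<^sup>2 \<le> real m / (real m + 1) * (2 * A + 2 * B)"
    using D q by (intro mult_left_mono) auto
  also have "\<dots> = real m / (real m + 1) * (2 * A) + real m / (real m + 1) * (2 * B)"
    by (simp add: algebra_simps)
  also have "\<dots> \<le> 2 * A + 2 * ((1 / (real m + 1)) * C)"
  proof -
    have "real m / (real m + 1) * (2 * A) \<le> 2 * A" by (rule mult_left_le_one_le) (use q A0 in auto)
    moreover have "real m / (real m + 1) * (2 * B) \<le> real m / (real m + 1) * (2 * ((1 / real m) * C))"
      using BC q by (intro mult_left_mono) auto
    moreover have "real m / (real m + 1) * (2 * ((1 / real m) * C)) = 2 * ((1 / (real m + 1)) * C)"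
      using m(1) by (simp add: divide_simps)
    ultimately show ?thesis by linarith
  qed
  finally have fin: "real m / (real m + 1) * (norm (x i - xbar x m))\<^sup>2 \<le> 2 * A + 2 * (1 / (real m + 1) * C)" .
  have im: "i - 1 = m" by (simp add: m_def)
  show ?thesis unfolding im unfolding m(3) unfolding m(2) using fin unfolding A_def C_def .
qed

lemma gen: "(n::real) > 0 \<Longrightarrow> - r / (2 * n) * (2 * (a + b)) = - r * ((1 / n) * a + (1 / n) * b)"
  by (simp add: field_simps)

theorem mainTheorem10:
  fixes f :: "'a::euclidean_space \<Rightarrow> real" and \<rho> :: real
    and x :: "nat \<Rightarrow> 'a" and N :: nat
  assumes "rho_convex \<rho> f" and "N \<ge> 1"
  shows "(f (xbar x N) \<le> (1 / real N) * (\<Sum>i=1..N. f (x i))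
           - \<rho> / (2 * real N) * (\<Sum>i=1..N. (real i - 1) / real i * (norm (x i - xbar x (i - 1)))\<^sup>2))
         \<and> (\<forall>z. f (xbar x N) \<le> (1 / real N) * (\<Sum>i=1..N. f (x i))
           + max 0 (- \<rho>) * ((1 / real N) * (\<Sum>i=1..N. (norm (x i - z))\<^sup>2)
              + (1 / real N) * (\<Sum>i=1..N. (1 / real i) * (\<Sum>j=1..i-1. (norm (x j - z))\<^sup>2))))"
proof -
  define S where "S = (\<Sum>i=1..N. (real i - 1) / real i * (norm (x i - xbar x (i - 1)))\<^sup>2)"
  have Npos: "real N > 0" using assms(2) by simp
  have T: "real N * f (xbar x N) \<le> (\<Sum>i=1..N. f (x i)) - \<rho> / 2 * S"
    using telescope[OF assms(1), of N x] unfolding S_def .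
  have P1: "f (xbar x N) \<le> (1 / real N) * (\<Sum>i=1..N. f (x i)) - \<rho> / (2 * real N) * S"
  proof -
    have "f (xbar x N) \<le> ((\<Sum>i=1..N. f (x i)) - \<rho> / 2 * S) / real N"
      unfolding pos_le_divide_eq[OF Npos] using T by (simp add: mult.commute)
    also have "\<dots> = (1 / real N) * (\<Sum>i=1..N. f (x i)) - \<rho> / (2 * real N) * S"
      using Npos by (simp add: field_simps)
    finally show ?thesis .
  qed
  have S0: "S \<ge> 0" unfolding S_def by (intro sum_nonneg) auto
  have P2: "f (xbar x N) \<le> (1 / real N) * (\<Sum>i=1..N. f (x i))
           + max 0 (- \<rho>) * ((1 / real N) * (\<Sum>i=1..N. (norm (x i - z))\<^sup>2)
              + (1 / real N) * (\<Sum>i=1..N. (1 / real i) * (\<Sum>j=1..i-1. (norm (x j - z))\<^sup>2)))" for z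
  proof (cases "\<rho> \<ge> 0")
    case True
    have "\<rho> / (2 * real N) * S \<ge> 0" using True S0 Npos by simp
    then show ?thesis using P1 True by simp
  next
    case False
    define R where "R = (\<Sum>i=1..N. (norm (x i - z))\<^sup>2) + (\<Sum>i=1..N. (1 / real i) * (\<Sum>j=1..i-1. (norm (x j - z))\<^sup>2))"
    have "S \<le> (\<Sum>i=1..N. 2 * (norm (x i - z))\<^sup>2 + 2 * ((1 / real i) * (\<Sum>j=1..i-1. (norm (x j - z))\<^sup>2)))"
      unfolding S_def by (intro sum_mono per_i) auto
    also have "\<dots> = 2 * R" unfolding R_def by (simp add: sum.distrib sum_distrib_left)
    finally have SR: "S \<le> 2 * R" .
    have "- \<rho> / (2 * real N) * S \<le> - \<rho> / (2 * real N) * (2 * R)"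
    proof (rule mult_left_mono[OF SR])
      show "0 \<le> - \<rho> / (2 * real N)" using False Npos by (intro divide_nonneg_pos) auto
    qed
    also have "\<dots> = max 0 (- \<rho>) * ((1 / real N) * (\<Sum>i=1..N. (norm (x i - z))\<^sup>2)
              + (1 / real N) * (\<Sum>i=1..N. (1 / real i) * (\<Sum>j=1..i-1. (norm (x j - z))\<^sup>2)))"
      using False gen[OF Npos] unfolding R_def by simp
    finally show ?thesis using P1 by simp
  qed
  show ?thesis using P1 P2 unfolding S_def by blast
qed

end
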